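(* Let $Y$ be a Hausdorff space and $g:[0,1]\to Y$ a continuous surjection. The following are equivalent: (a) $g$ is arcwise increasing; (b) $g$ is hereditarily irreducible; (c) $g$ is strongly irreducible; (d) $g$ is almost injective.
   Context: For a continuous map $g:X\to Y$ between continua: $g$ is almost injective if $\{x: g^{-1}(g(x))=\{x\}\}$ is dense in $X$; irreducible if $g(K)\subsetneq g(X)$ for every proper subcontinuum $K\subsetneq X$; hereditarily irreducible if $g(A)\subsetneq g(B)$ for all subcontinua $A\subsetneq B$ of $X$; strongly irreducible if $g(A)\subsetneq g(X)$ for every closed $A\subsetneq X$; arcwise increasing if $g(A)\subsetneq g(B)$ for all arcs $A\subsetneq B$ in $X$. *)

theory Defs
  imports "HOL-Analysis.Analysis"
begin

definition subcontinuum :: "'a topology \<Rightarrow> 'a set \<Rightarrow> bool" where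
  "subcontinuum X K \<longleftrightarrow> K \<noteq> {} \<and> compactin X K \<and> connectedin X K"

definition arc_in :: "'a topology \<Rightarrow> 'a set \<Rightarrow> bool" where
  "arc_in X A \<longleftrightarrow> A \<subseteq> topspace X \<and>
     (subtopology X A) homeomorphic_space (top_of_set {0..1::real})"

definition almost_injective :: "'a topology \<Rightarrow> ('a \<Rightarrow> 'b) \<Rightarrow> bool" where
  "almost_injective X g \<longleftrightarrow>
     X closure_of {x \<in> topspace X. {x' \<in> topspace X. g x' = g x} = {x}} = topspace X"

definition irreducible_map :: "'a topology \<Rightarrow> ('a \<Rightarrow> 'b) \<Rightarrow> bool" where
  "irreducible_map X g \<longleftrightarrow>
     (\<forall>K. subcontinuum X K \<and> K \<subset> topspace X \<longrightarrow> g ` K \<subset> g ` topspace X)"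

definition hereditarily_irreducible :: "'a topology \<Rightarrow> ('a \<Rightarrow> 'b) \<Rightarrow> bool" where
  "hereditarily_irreducible X g \<longleftrightarrow>
     (\<forall>A B. subcontinuum X A \<and> subcontinuum X B \<and> A \<subset> B \<longrightarrow> g ` A \<subset> g ` B)"

definition strongly_irreducible :: "'a topology \<Rightarrow> ('a \<Rightarrow> 'b) \<Rightarrow> bool" where
  "strongly_irreducible X g \<longleftrightarrow>
     (\<forall>A. closedin X A \<and> A \<subset> topspace X \<longrightarrow> g ` A \<subset> g ` topspace X)"

definition arcwise_increasing :: "'a topology \<Rightarrow> ('a \<Rightarrow> 'b) \<Rightarrow> bool" where
  "arcwise_increasing X g \<longleftrightarrow>
     (\<forall>A B. arc_in X A \<and> arc_in X B \<and> A \<subset> B \<longrightarrow> g ` A \<subset> g ` B)"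

end

theory Submission
  imports Defs
begin

lemma homeo_sp_iff: "top_of_set S homeomorphic_space top_of_set T \<longleftrightarrow> (S::real set) homeomorphic (T::real set)"
proof
  assume "top_of_set S homeomorphic_space top_of_set T"
  then obtain f g where "homeomorphic_maps (top_of_set S) (top_of_set T) f g"
    unfolding homeomorphic_space_def by blast
  then have "homeomorphism S T f g"
    unfolding homeomorphic_maps_def homeomorphism_def
    by (auto simp: continuous_map_subtopology_eu image_subset_iff_funcset) (force simp: image_iff Pi_iff)+
  then show "S homeomorphic T" unfolding homeomorphic_def by blast
next
  assume "S homeomorphic T"
  then obtain f g where "homeomorphism S T f g" unfolding homeomorphic_def by blast
  then have "homeomorphic_maps (top_of_set S) (top_of_set T) f g"
    unfolding homeomorphic_maps_def homeomorphism_def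
    by (auto simp: continuous_map_subtopology_eu image_subset_iff_funcset)
  then show "top_of_set S homeomorphic_space top_of_set T"
    unfolding homeomorphic_space_def by blast
qed


lemma arc_iff: "arc_in (top_of_set {0..1::real}) A \<longleftrightarrow> A \<subseteq> {0..1} \<and> (\<exists>a b. a < b \<and> A = {a..b})"
proof
  assume "arc_in (top_of_set {0..1::real}) A"
  then have A: "A \<subseteq> {0..1}" and h: "A homeomorphic {0..1::real}"
    unfolding arc_in_def by (auto simp: subtopology_subtopology Int_absorb1 homeo_sp_iff)
  have "compact A" "connected A" using homeomorphic_compactness[OF h] homeomorphic_connectedness[OF h] by auto

  then obtain a b where ab: "A = {a..b}" using connected_compact_interval_1 by blast
  have "a < b"
  proof (rule ccontr)
    assume "\<not> a < b"
    then have "finite A" using ab by (cases "a = b") (auto simp: not_less)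
    moreover have "{0..1::real} homeomorphic A" using h homeomorphic_sym by blast
    ultimately have "finite {0..1::real}" using homeomorphic_finite by blast
    then show False using infinite_Icc[of "0::real" 1] by simp
  qed
  then show "A \<subseteq> {0..1} \<and> (\<exists>a b. a < b \<and> A = {a..b})" using A ab by blast
next
  assume "A \<subseteq> {0..1} \<and> (\<exists>a b. a < b \<and> A = {a..b})"
  then obtain a b where "A \<subseteq> {0..1}" "a<b" "A = {a..b}" by blast
  then show "arc_in (top_of_set {0..1::real}) A"
    unfolding arc_in_def
    by (simp add: subtopology_subtopology Int_absorb1 homeo_sp_iff homeomorphic_closed_intervals_real)
qed

lemma sc_iff: "subcontinuum (top_of_set {0..1::real}) K \<longleftrightarrow> K \<noteq> {} \<and> K \<subseteq> {0..1} \<and> compact K \<and> connected K"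
  unfolding subcontinuum_def
  by (auto simp: compactin_subtopology connectedin_subtopology compactin_euclidean_iff connectedin_iff_connected)

lemma sc_iff2: "subcontinuum (top_of_set {0..1::real}) K \<longleftrightarrow> K \<subseteq> {0..1} \<and> (\<exists>a b. a \<le> b \<and> K = {a..b})"
  unfolding sc_iff using connected_compact_interval_1 
  by (metis atLeastAtMost_iff atLeastatMost_empty_iff compact_Icc connected_Icc order.refl)

lemma small_int:
  fixes s t x d :: real
  assumes "s \<le> x" "x \<le> t" "s < t" "d > 0"
  shows "\<exists>p q. s \<le> p \<and> p < q \<and> q \<le> t \<and> x - d < p \<and> q < x + d"
proof (cases "x < t")
  case True
  then show ?thesis using assms by (intro exI[of _ x] exI[of _ "min (x + d/2) t"]) auto
next
  case False
  then show ?thesis using assms by (intro exI[of _ "max (x - d/2) s"] exI[of _ x]) auto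
qed


lemma a_iff_b: "arcwise_increasing (top_of_set {0..1::real}) g \<longleftrightarrow> hereditarily_irreducible (top_of_set {0..1}) g"
proof
  assume b: "hereditarily_irreducible (top_of_set {0..1::real}) g"
  show "arcwise_increasing (top_of_set {0..1::real}) g"
    unfolding arcwise_increasing_def
  proof (intro allI impI)
    fix A B assume "arc_in (top_of_set {0..1::real}) A \<and> arc_in (top_of_set {0..1}) B \<and> A \<subset> B"
    then have "subcontinuum (top_of_set {0..1::real}) A \<and> subcontinuum (top_of_set {0..1}) B \<and> A \<subset> B"
      unfolding arc_iff sc_iff2 by (blast intro: less_imp_le)
    then show "g ` A \<subset> g ` B" using b unfolding hereditarily_irreducible_def by blast
  qed
next
  assume a: "arcwise_increasing (top_of_set {0..1::real}) g"
  show "hereditarily_irreducible (top_of_set {0..1::real}) g"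
    unfolding hereditarily_irreducible_def
  proof (intro allI impI)
    fix A B assume h: "subcontinuum (top_of_set {0..1::real}) A \<and> subcontinuum (top_of_set {0..1}) B \<and> A \<subset> B"
    then obtain a b c d where ab: "a \<le> b" "A = {a..b}" and cd: "c \<le> d" "B = {c..d}" and B01: "B \<subseteq> {0..1}"
      unfolding sc_iff2 by blast
    have sub: "g ` A \<subseteq> g ` B" using h by blast
    have "g ` A \<noteq> g ` B"
    proof
      assume eq: "g ` A = g ` B"
      show False
      proof (cases "a < b")
        case True
        have "a \<in> B" "b \<in> B" using ab h True by auto
        then have "c < d" using ab cd True by auto
        then have "arc_in (top_of_set {0..1::real}) A \<and> arc_in (top_of_set {0..1}) B \<and> A \<subset> B"
          unfolding arc_iff using True ab cd h B01 by blast
        then show False using a eq unfolding arcwise_increasing_def by blast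
      next
        case False
        then have Aa: "A = {a}" using ab by auto
        have "a \<in> B" using h Aa by auto
        have "c < d"
        proof (rule ccontr)
          assume "\<not> c < d"
          then have "B = {c}" using cd by auto
          then have "A = B" using Aa \<open>a \<in> B\<close> by auto
          then show False using h by auto
        qed
        define m where "m = (c + d) / 2"
        have "c < m" "m < d" using \<open>c < d\<close> unfolding m_def by auto
        have arcs: "arc_in (top_of_set {0..1::real}) {c..m} \<and> arc_in (top_of_set {0..1}) B \<and> {c..m} \<subset> B"
          unfolding arc_iff using \<open>c < m\<close> \<open>m < d\<close> \<open>c<d\<close> cd B01 by auto
        have "g ` {c..m} \<subseteq> {g a}" using eq Aa cd \<open>m < d\<close> by auto
        moreover have "g c \<in> g ` {c..m}" using \<open>c < m\<close> by auto
        ultimately have "g ` {c..m} = {g a}" by (metis subset_singletonD empty_iff)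
        moreover have "g ` B = {g a}" using eq Aa by simp
        ultimately have "g ` {c..m} = g ` B" by simp
        then show False using a arcs unfolding arcwise_increasing_def by blast
      qed
    qed
    then show "g ` A \<subset> g ` B" using sub by blast
  qed
qed

lemma gap:
  assumes "subcontinuum (top_of_set {0..1::real}) A" "subcontinuum (top_of_set {0..1}) B" "A \<subset> B"
  shows "\<exists>p q. p < q \<and> {p<..<q} \<subseteq> B - A"
proof -
  obtain a b c d where ab: "a \<le> b" "A = {a..b}" and cd: "c \<le> d" "B = {c..d}"
    using assms unfolding sc_iff2 by blast
  have "a \<in> B" "b \<in> B" using ab assms(3) by auto
  then have ca: "c \<le> a" and bd: "b \<le> d" using cd by auto
  show ?thesis
  proof (cases "c < a")
    case True
    have "{c<..<a} \<subseteq> B - A" using ab cd bd by auto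
    then show ?thesis using True by blast
  next
    case False
    have "b < d"
    proof (rule ccontr)
      assume "\<not> b < d"
      then have "A = B" using ab cd ca bd False by auto
      then show False using assms(3) by simp
    qed
    have "{b<..<d} \<subseteq> B - A" using ab cd ca by auto
    then show ?thesis using \<open>b < d\<close> by blast
  qed
qed

lemma c_imp_b:
  assumes c: "strongly_irreducible (top_of_set {0..1::real}) g"
  shows "hereditarily_irreducible (top_of_set {0..1::real}) g"
  unfolding hereditarily_irreducible_def
proof (intro allI impI)
  fix A B assume h: "subcontinuum (top_of_set {0..1::real}) A \<and> subcontinuum (top_of_set {0..1}) B \<and> A \<subset> B"
  then obtain p q where pq: "p < q" "{p<..<q} \<subseteq> B - A" using gap by blast
  have B01: "B \<subseteq> {0..1}" using h sc_iff by blast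
  have sub: "g ` A \<subseteq> g ` B" using h by blast
  have "g ` A \<noteq> g ` B"
  proof
    assume eq: "g ` A = g ` B"
    define C where "C = {0..1::real} - {p<..<q}"
    have cl: "closedin (top_of_set {0..1::real}) C"
      unfolding C_def closedin_closed by (intro exI[of _ "- {p<..<q}"]) (auto simp: closed_Compl)
    have "(p+q)/2 \<in> {p<..<q}" using pq by auto
    then have m: "(p+q)/2 \<in> B - A" using pq(2) by (rule rev_subsetD)
    have "(p+q)/2 \<in> {0..1} - C" using m B01 \<open>(p+q)/2 \<in> {p<..<q}\<close> unfolding C_def by blast
    moreover have "C \<subseteq> {0..1}" unfolding C_def by auto
    ultimately have psub: "C \<subset> topspace (top_of_set {0..1::real})" by auto
    have "A \<subseteq> B" using h by blast
    then have AC: "A \<subseteq> C" using B01 pq(2) unfolding C_def by blast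
    have "g ` {0..1} \<subseteq> g ` C"
    proof
      fix y assume "y \<in> g ` {0..1::real}"
      then obtain x where x: "x \<in> {0..1}" "y = g x" by blast
      show "y \<in> g ` C"
      proof (cases "x \<in> C")
        case True then show ?thesis using x by blast
      next
        case False
        then have "x \<in> {p<..<q}" using x unfolding C_def by blast
        then have "x \<in> B" using pq(2) by blast
        then have "y \<in> g ` A" using eq x by blast
        then show ?thesis using AC by blast
      qed
    qed
    moreover have "closedin (top_of_set {0..1::real}) C \<and> C \<subset> topspace (top_of_set {0..1::real}) \<longrightarrow> g ` C \<subset> g ` topspace (top_of_set {0..1::real})"
      using c unfolding strongly_irreducible_def by (rule spec)
    then have "g ` C \<subset> g ` {0..1}" using cl psub by simp
    ultimately show False using psubset_subset_trans[of "g ` C" "g ` {0..1}" "g ` C"] by simp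
  qed
  then show "g ` A \<subset> g ` B" using sub by blast
qed

lemma d_imp_c:
  assumes d: "almost_injective (top_of_set {0..1::real}) g"
  shows "strongly_irreducible (top_of_set {0..1::real}) g"
  unfolding strongly_irreducible_def
proof (intro allI impI)
  fix A assume h: "closedin (top_of_set {0..1::real}) A \<and> A \<subset> topspace (top_of_set {0..1::real})"
  then obtain z where z: "z \<in> {0..1}" "z \<notin> A" using psubset_imp_ex_mem by fastforce
  have op: "openin (top_of_set {0..1::real}) ({0..1} - A)"
    using h by (metis openin_diff openin_topspace topspace_euclidean_subtopology)
  let ?G = "{x \<in> topspace (top_of_set {0..1::real}). {x' \<in> topspace (top_of_set {0..1::real}). g x' = g x} = {x}}"
  have "z \<in> (top_of_set {0..1::real}) closure_of ?G" using d z unfolding almost_injective_def by auto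
  then obtain y where y: "y \<in> ?G" "y \<in> {0..1} - A"
    using op z unfolding in_closure_of by blast
  have "g y \<notin> g ` A"
  proof
    assume "g y \<in> g ` A"
    then obtain w where "w \<in> A" "g w = g y" by auto
    moreover have "A \<subseteq> {0..1}" using h by auto
    ultimately have memb: "w \<in> {x' \<in> topspace (top_of_set {0..1::real}). g x' = g y}" by auto
    have fib: "{x' \<in> topspace (top_of_set {0..1::real}). g x' = g y} = {y}" using y(1) by simp
    have "w \<in> {y}" using memb unfolding fib .
    then have "w = y" by simp
    then show False using \<open>w \<in> A\<close> y(2) by blast
  qed
  moreover have "y \<in> topspace (top_of_set {0..1::real})" using y by auto
  moreover have "g ` A \<subseteq> g ` topspace (top_of_set {0..1::real})" using h by auto
  ultimately show "g ` A \<subset> g ` topspace (top_of_set {0..1::real})" by blast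
qed



lemma diag_closed:
  assumes H: "Hausdorff_space Y" and cont: "continuous_map (top_of_set {0..1::real}) Y g"
  shows "closed {z \<in> {0..1::real} \<times> {0..1}. g (fst z) = g (snd z)}"
proof -
  let ?I = "{0..1::real}"
  have dg: "closedin (prod_topology Y Y) ((\<lambda>y. (y,y)) ` topspace Y)"
    using H Hausdorff_space_closedin_diagonal by blast
  have c1: "continuous_map (prod_topology (top_of_set ?I) (top_of_set ?I)) Y (g \<circ> fst)"
    using continuous_map_compose[OF continuous_map_fst[of "top_of_set ?I" "top_of_set ?I"] cont] .
  have c2: "continuous_map (prod_topology (top_of_set ?I) (top_of_set ?I)) Y (g \<circ> snd)"
    using continuous_map_compose[OF continuous_map_snd[of "top_of_set ?I" "top_of_set ?I"] cont] .
  have cp: "continuous_map (prod_topology (top_of_set ?I) (top_of_set ?I)) (prod_topology Y Y) (\<lambda>z. ((g \<circ> fst) z, (g \<circ> snd) z))"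
    by (rule iffD2[OF continuous_map_paired], rule conjI[OF c1 c2])
  have cl: "closedin (prod_topology (top_of_set ?I) (top_of_set ?I))
     {z \<in> topspace (prod_topology (top_of_set ?I) (top_of_set ?I)). ((g \<circ> fst) z, (g \<circ> snd) z) \<in> (\<lambda>y. (y,y)) ` topspace Y}"
    using closedin_continuous_map_preimage[OF cp dg] .
  have gY: "g x \<in> topspace Y" if "x \<in> ?I" for x
    using continuous_map_image_subset_topspace[OF cont] that by auto
  have eq: "{z \<in> topspace (prod_topology (top_of_set ?I) (top_of_set ?I)). ((g \<circ> fst) z, (g \<circ> snd) z) \<in> (\<lambda>y. (y,y)) ` topspace Y}
      = {z \<in> ?I \<times> ?I. g (fst z) = g (snd z)}"
    using gY by auto
  have "closedin (top_of_set (?I \<times> ?I)) {z \<in> ?I \<times> ?I. g (fst z) = g (snd z)}"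
    using cl unfolding eq by simp
  then show ?thesis
    by (rule closedin_closed_trans) (simp_all add: closed_Times)
qed


lemma b_imp_d:
  assumes H: "Hausdorff_space Y" and cont: "continuous_map (top_of_set {0..1::real}) Y g"
    and b: "hereditarily_irreducible (top_of_set {0..1::real}) g"
  shows "almost_injective (top_of_set {0..1::real}) g"
proof (rule ccontr)
  define I where "I = {0..1::real}"
  define G where "G = {x \<in> topspace (top_of_set I). {x' \<in> topspace (top_of_set I). g x' = g x} = {x}}"
  assume "\<not> almost_injective (top_of_set {0..1::real}) g"
  then have ne: "top_of_set I closure_of G \<noteq> I" unfolding almost_injective_def I_def G_def by simp
  have "top_of_set I closure_of G \<subseteq> I" using closure_of_subset_topspace[of "top_of_set I" G] by simp
  then obtain x0 where x0: "x0 \<in> I" "x0 \<notin> top_of_set I closure_of G" using ne by blast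
  then obtain T where T: "openin (top_of_set I) T" "x0 \<in> T" "\<And>y. y \<in> G \<Longrightarrow> y \<notin> T"
    unfolding in_closure_of by auto
  then obtain U where U: "open U" "T = I \<inter> U" using openin_open by metis
  then obtain e where e: "e > 0" "ball x0 e \<subseteq> U" using T(2) open_contains_ball by blast
  obtain s t where st: "0 \<le> s" "s < t" "t \<le> 1" "x0 - e < s" "t < x0 + e"
    using small_int[of 0 x0 1 e] x0(1) e(1) unfolding I_def by auto
  have bad: "\<exists>x'. x' \<in> I \<and> x' \<noteq> x \<and> g x' = g x" if x: "x \<in> {s..t}" for x
  proof -
    have "dist x0 x < e" using x st by (simp add: dist_real_def abs_less_iff)
    then have "x \<in> ball x0 e" by simp
    then have "x \<in> U" using e(2) by (rule rev_subsetD)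
    moreover have xI: "x \<in> I" using x st unfolding I_def by simp
    ultimately have "x \<in> T" using U(2) by simp
    then have "x \<notin> G" using T(3) by metis
    then have neq: "{x' \<in> I. g x' = g x} \<noteq> {x}" using xI unfolding G_def by simp
    show ?thesis
    proof (rule ccontr)
      assume "\<not> (\<exists>x'. x' \<in> I \<and> x' \<noteq> x \<and> g x' = g x)"
      then have "{x' \<in> I. g x' = g x} = {x}" using xI by auto
      then show False using neq by simp
    qed
  qed
  define D where "D = {z \<in> I \<times> I. g (fst z) = g (snd z)}"
  have "closed D" unfolding D_def I_def by (rule diag_closed[OF H cont])
  have cD: "compact D"
  proof -
    have "compact ((I \<times> I) \<inter> D)" unfolding I_def
      by (rule compact_Int_closed[OF compact_Times[OF compact_Icc compact_Icc] \<open>closed D\<close>])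
    moreover have "(I \<times> I) \<inter> D = D" unfolding D_def by auto
    ultimately show ?thesis by simp
  qed
  define F where "F n = fst ` (D \<inter> {z. s \<le> fst z \<and> fst z \<le> t \<and> snd z \<le> fst z - 1 / real (Suc n)})" for n
  define K where "K n = fst ` (D \<inter> {z. s \<le> fst z \<and> fst z \<le> t \<and> fst z + 1 / real (Suc n) \<le> snd z})" for n
  have clF: "closed (F n)" for n
  proof -
    have "closed {z::real\<times>real. s \<le> fst z \<and> fst z \<le> t \<and> snd z \<le> fst z - 1 / real (Suc n)}"
      by (intro closed_Collect_conj closed_Collect_le continuous_intros)
    then have "compact (D \<inter> {z. s \<le> fst z \<and> fst z \<le> t \<and> snd z \<le> fst z - 1 / real (Suc n)})"
      by (rule compact_Int_closed[OF cD])
    then have "compact (F n)" unfolding F_def by (rule compact_continuous_image[OF continuous_on_fst[OF continuous_on_id]])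
    then show ?thesis by (rule compact_imp_closed)
  qed
  have clK: "closed (K n)" for n
  proof -
    have "closed {z::real\<times>real. s \<le> fst z \<and> fst z \<le> t \<and> fst z + 1 / real (Suc n) \<le> snd z}"
      by (intro closed_Collect_conj closed_Collect_le continuous_intros)
    then have "compact (D \<inter> {z. s \<le> fst z \<and> fst z \<le> t \<and> fst z + 1 / real (Suc n) \<le> snd z})"
      by (rule compact_Int_closed[OF cD])
    then have "compact (K n)" unfolding K_def by (rule compact_continuous_image[OF continuous_on_fst[OF continuous_on_id]])
    then show ?thesis by (rule compact_imp_closed)
  qed
  have cover: "\<exists>n. x \<in> F n \<or> x \<in> K n" if x: "x \<in> {s..t}" for x
  proof -
    obtain x' where x': "x' \<in> I" "x' \<noteq> x" "g x' = g x" using bad[OF x] by blast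
    have xI: "x \<in> I" using x st unfolding I_def by simp
    have xD: "(x, x') \<in> D" using x' xI unfolding D_def by simp
    show ?thesis
    proof (cases "x' < x")
      case True
      then have "0 < x - x'" by simp
      then obtain n where n: "inverse (real (Suc n)) < x - x'" using reals_Archimedean by blast
      then have "1 / real (Suc n) < x - x'" by (simp add: inverse_eq_divide)
      then have "x' \<le> x - 1 / real (Suc n)" by linarith
      then have "(x, x') \<in> D \<inter> {z. s \<le> fst z \<and> fst z \<le> t \<and> snd z \<le> fst z - 1 / real (Suc n)}"
        using xD x by simp
      then have "x \<in> F n" unfolding F_def by (rule rev_image_eqI) simp
      then show ?thesis by (intro exI[of _ n]) simp
    next
      case False
      then have "x < x'" using x'(2) by linarith
      then have "0 < x' - x" by simp
      then obtain n where n: "inverse (real (Suc n)) < x' - x" using reals_Archimedean by blast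
      then have "1 / real (Suc n) < x' - x" by (simp add: inverse_eq_divide)
      then have "x + 1 / real (Suc n) \<le> x'" by linarith
      then have "(x, x') \<in> D \<inter> {z. s \<le> fst z \<and> fst z \<le> t \<and> fst z + 1 / real (Suc n) \<le> snd z}"
        using xD x by simp
      then have "x \<in> K n" unfolding K_def by (rule rev_image_eqI) simp
      then show ?thesis by (intro exI[of _ n]) simp
    qed
  qed
  define S where "S = {s..t}"
  have "\<exists>n. \<not> S \<subseteq> closure (S - F n) \<or> \<not> S \<subseteq> closure (S - K n)"
  proof (rule ccontr)
    assume "\<not> ?thesis"
    then have dF: "S \<subseteq> closure (S - F n)" and dK: "S \<subseteq> closure (S - K n)" for n by auto
    define \<G> where "\<G> = range (\<lambda>n. S - F n) \<union> range (\<lambda>n. S - K n)"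
    have "countable \<G>" unfolding \<G>_def by simp
    moreover have "openin (top_of_set S) T' \<and> S \<subseteq> closure T'" if T'G: "T' \<in> \<G>" for T'
    proof -
      obtain n where "T' = S - F n \<or> T' = S - K n" using T'G unfolding \<G>_def by blast
      then show ?thesis
      proof
        assume T': "T' = S - F n"
        have "openin (top_of_set S) (S \<inter> (- F n))" using clF[of n] by (intro openin_open_Int) (auto simp: open_Compl)
        moreover have "S \<inter> (- F n) = S - F n" by auto
        ultimately show ?thesis using dF[of n] T' by simp
      next
        assume T': "T' = S - K n"
        have "openin (top_of_set S) (S \<inter> (- K n))" using clK[of n] by (intro openin_open_Int) (auto simp: open_Compl)
        moreover have "S \<inter> (- K n) = S - K n" by auto
        ultimately show ?thesis using dK[of n] T' by simp
      qed
    qed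
    ultimately have "S \<subseteq> closure (\<Inter>\<G>)" using Baire[of S \<G>] unfolding S_def by simp
    moreover have "\<Inter>\<G> = {}"
    proof (rule equals0I)
      fix x assume xG: "x \<in> \<Inter>\<G>"
      have "S - F 0 \<in> \<G>" unfolding \<G>_def by simp
      then have "x \<in> S" using xG by blast
      then obtain n where "x \<in> F n \<or> x \<in> K n" using cover unfolding S_def by blast
      moreover have "S - F n \<in> \<G>" "S - K n \<in> \<G>" unfolding \<G>_def by simp_all
      ultimately show False using xG by blast
    qed
    moreover have "s \<in> S" using st unfolding S_def by simp
    ultimately show False by simp
  qed
  then obtain n where "\<not> S \<subseteq> closure (S - F n) \<or> \<not> S \<subseteq> closure (S - K n)" by blast
  then show False
  proof
    assume "\<not> S \<subseteq> closure (S - F n)"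
    then obtain x where x: "x \<in> S" "x \<notin> closure (S - F n)" by blast
    then obtain e2 where e2: "e2 > 0" "\<And>y. y \<in> S - F n \<Longrightarrow> \<not> dist y x < e2"
      unfolding closure_approachable by auto
    define d where "d = min e2 (1 / real (Suc n) / 2)"
    have "d > 0" unfolding d_def using e2 by simp
    obtain p q where pq: "s \<le> p" "p < q" "q \<le> t" "x - d < p" "q < x + d"
      using small_int[of s x t d] x(1) \<open>d > 0\<close> st unfolding S_def by auto
    have "g ` {0..q} \<subseteq> g ` {0..p}"
    proof
      fix y assume "y \<in> g ` {0..q}"
      then obtain u where u: "u \<in> {0..q}" "y = g u" by blast
      show "y \<in> g ` {0..p}"
      proof (cases "u \<le> p")
        case True then show ?thesis using u by simp
      next
        case False
        then have uS: "u \<in> S" using u pq st unfolding S_def by simp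
        have "dist u x < d" using False u pq by (simp add: dist_real_def abs_less_iff)
        then have "dist u x < e2" unfolding d_def by simp
        then have "u \<in> F n" using e2(2) uS by blast
        then obtain z where z: "z \<in> D" "fst z = u" "snd z \<le> u - 1 / real (Suc n)"
          unfolding F_def by auto
        have "q - p < 2 * d" using pq by simp
        also have "\<dots> \<le> 1 / real (Suc n)"
        proof -
          have d1: "d \<le> 1 / real (Suc n) / 2" unfolding d_def by (rule min.cobounded2)
          have aux: "\<And>a c::real. a \<le> c / 2 \<Longrightarrow> 2 * a \<le> c" by linarith
          show ?thesis by (rule aux[OF d1])
        qed
        finally have "snd z < p" using z(3) u by simp
        moreover have "snd z \<in> I" "g (snd z) = g u" using z(1,2) unfolding D_def by auto
        ultimately have "g u \<in> g ` {0..p}" unfolding I_def by (intro image_eqI[of _ _ "snd z"]) auto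
        then show ?thesis using u by simp
      qed
    qed
    moreover have "subcontinuum (top_of_set {0..1}) {0..p} \<and> subcontinuum (top_of_set {0..1}) {0..q} \<and> {0..p} \<subset> {0..q}"
      unfolding sc_iff2 using pq st by auto
    then have "g ` {0..p} \<subset> g ` {0..q}" using b unfolding hereditarily_irreducible_def by blast
    ultimately show False by auto
  next
    assume "\<not> S \<subseteq> closure (S - K n)"
    then obtain x where x: "x \<in> S" "x \<notin> closure (S - K n)" by blast
    then obtain e2 where e2: "e2 > 0" "\<And>y. y \<in> S - K n \<Longrightarrow> \<not> dist y x < e2"
      unfolding closure_approachable by auto
    define d where "d = min e2 (1 / real (Suc n) / 2)"
    have "d > 0" unfolding d_def using e2 by simp
    obtain p q where pq: "s \<le> p" "p < q" "q \<le> t" "x - d < p" "q < x + d"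
      using small_int[of s x t d] x(1) \<open>d > 0\<close> st unfolding S_def by auto
    have "g ` {p..1} \<subseteq> g ` {q..1}"
    proof
      fix y assume "y \<in> g ` {p..1}"
      then obtain u where u: "u \<in> {p..1}" "y = g u" by blast
      show "y \<in> g ` {q..1}"
      proof (cases "q \<le> u")
        case True then show ?thesis using u by simp
      next
        case False
        then have uS: "u \<in> S" using u pq st unfolding S_def by simp
        have "dist u x < d" using False u pq by (simp add: dist_real_def abs_less_iff)
        then have "dist u x < e2" unfolding d_def by simp
        then have "u \<in> K n" using e2(2) uS by blast
        then obtain z where z: "z \<in> D" "fst z = u" "u + 1 / real (Suc n) \<le> snd z"
          unfolding K_def by auto
        have "q - p < 2 * d" using pq by simp
        also have "\<dots> \<le> 1 / real (Suc n)"
        proof -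
          have d1: "d \<le> 1 / real (Suc n) / 2" unfolding d_def by (rule min.cobounded2)
          have aux: "\<And>a c::real. a \<le> c / 2 \<Longrightarrow> 2 * a \<le> c" by linarith
          show ?thesis by (rule aux[OF d1])
        qed
        finally have "q < snd z" using z(3) u by simp
        moreover have "snd z \<in> I" "g (snd z) = g u" using z(1,2) unfolding D_def by auto
        ultimately have "g u \<in> g ` {q..1}" unfolding I_def by (intro image_eqI[of _ _ "snd z"]) auto
        then show ?thesis using u by simp
      qed
    qed
    moreover have "subcontinuum (top_of_set {0..1}) {q..1} \<and> subcontinuum (top_of_set {0..1}) {p..1} \<and> {q..1} \<subset> {p..1}"
      unfolding sc_iff2 using pq st by auto
    then have "g ` {q..1} \<subset> g ` {p..1}" using b unfolding hereditarily_irreducible_def by blast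
    ultimately show False by auto
  qed
qed

theorem lemma2p2:
  fixes Y :: "'b topology" and g :: "real \<Rightarrow> 'b"
  assumes "Hausdorff_space Y"
    and "continuous_map (top_of_set {0..1}) Y g"
    and "g ` {0..1} = topspace Y"
  shows "(arcwise_increasing (top_of_set {0..1}) g \<longleftrightarrow> hereditarily_irreducible (top_of_set {0..1}) g)
       \<and> (hereditarily_irreducible (top_of_set {0..1}) g \<longleftrightarrow> strongly_irreducible (top_of_set {0..1}) g)
       \<and> (strongly_irreducible (top_of_set {0..1}) g \<longleftrightarrow> almost_injective (top_of_set {0..1}) g)"
proof -
  have 1: "arcwise_increasing (top_of_set {0..1}) g \<longleftrightarrow> hereditarily_irreducible (top_of_set {0..1}) g"
    by (rule a_iff_b)
  have 2: "strongly_irreducible (top_of_set {0..1}) g \<Longrightarrow> hereditarily_irreducible (top_of_set {0..1}) g"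
    by (rule c_imp_b)
  have 3: "hereditarily_irreducible (top_of_set {0..1}) g \<Longrightarrow> almost_injective (top_of_set {0..1}) g"
    by (rule b_imp_d[OF assms(1,2)])
  have 4: "almost_injective (top_of_set {0..1}) g \<Longrightarrow> strongly_irreducible (top_of_set {0..1}) g"
    by (rule d_imp_c)
  show ?thesis using 1 2 3 4 by blast
qed

end
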